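(* Let $T\in S(\lambda)$ be any standard Young tableau. Then $\chi^T(q)=\sum_k|S_k^T(\lambda)|q^k$ is log-concave, i.e. $|S_k^T(\lambda)|^2\ge|S_{k-1}^T(\lambda)|\,|S_{k+1}^T(\lambda)|$ for all $k\ge1$.
   Context: A shape $\lambda=(\lambda_1\ge\dots\ge\lambda_m\ge1)$ has $\lambda_i$ left-justified boxes in row $i$; $N=\sum\lambda_i$. $S(\lambda)$: standard Young tableaux (fillings with $1,\dots,N$ each once, strictly increasing along rows and down columns). A row-standard filling uses $1,\dots,N$ once each with rows strictly increasing. Inversion pairs of a row-standard $\tau$: for a box $c$ and $r\ge1$ let $c^{(r)}$ be the box $r$ positions to its right, if it exists. For distinct boxes $c,c'$ in the same column with $\tau(c)<\tau(c')$, let $r\ge1$ be least such that one of $c^{(r)},c'^{(r)}$ does not exist or $\tau(c^{(r)})\ne\tau(c'^{(r)})$; $(c,c')$ is an inversion pair if either (one does not exist and $c$ lies below $c'$) or (both exist and $\tau(c^{(r)})>\tau(c'^{(r)})$). $S_k(\lambda)$: row-standard fillings with exactly $k$ inversion pairs. $\mathrm{st}(\tau)$: sort each column increasingly; $S_k^T(\lambda)=\{\tau\in S_k(\lambda):\mathrm{st}(\tau)=T\}$. *)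

theory Defs
  imports Main
begin

text \<open>Boxes are pairs (row, column), both 0-indexed. A shape is a weakly
decreasing list of positive row lengths.\<close>

type_synonym box = "nat \<times> nat"

definition is_shape :: "nat list \<Rightarrow> bool" where
  "is_shape la \<longleftrightarrow> sorted_wrt (\<ge>) la \<and> 0 \<notin> set la"

definition boxes :: "nat list \<Rightarrow> box set" where
  "boxes la = {(i, j). i < length la \<and> j < la ! i}"

text \<open>Fillings are functions on boxes, set to 0 outside the shape.\<close>

definition row_standard :: "nat list \<Rightarrow> (box \<Rightarrow> nat) \<Rightarrow> bool" where
  "row_standard la \<tau> \<longleftrightarrow>
     bij_betw \<tau> (boxes la) {1..sum_list la} \<and>
     (\<forall>c. c \<notin> boxes la \<longrightarrow> \<tau> c = 0) \<and>
     (\<forall>i j. (i, Suc j) \<in> boxes la \<longrightarrow> \<tau> (i, j) < \<tau> (i, Suc j))"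

definition standard :: "nat list \<Rightarrow> (box \<Rightarrow> nat) \<Rightarrow> bool" where
  "standard la T \<longleftrightarrow> row_standard la T \<and>
     (\<forall>i j. (Suc i, j) \<in> boxes la \<longrightarrow> T (i, j) < T (Suc i, j))"

definition shift :: "box \<Rightarrow> nat \<Rightarrow> box" where
  "shift c r = (fst c, snd c + r)"

definition first_diff :: "nat list \<Rightarrow> (box \<Rightarrow> nat) \<Rightarrow> box \<Rightarrow> box \<Rightarrow> nat" where
  "first_diff la \<tau> c c' = (LEAST r. 1 \<le> r \<and>
      \<not> (shift c r \<in> boxes la \<and> shift c' r \<in> boxes la \<and> \<tau> (shift c r) = \<tau> (shift c' r)))"

definition inversion_pair :: "nat list \<Rightarrow> (box \<Rightarrow> nat) \<Rightarrow> box \<Rightarrow> box \<Rightarrow> bool" where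
  "inversion_pair la \<tau> c c' \<longleftrightarrow>
     c \<in> boxes la \<and> c' \<in> boxes la \<and> c \<noteq> c' \<and> snd c = snd c' \<and> \<tau> c < \<tau> c' \<and>
     (let r = first_diff la \<tau> c c' in
        (\<not> (shift c r \<in> boxes la \<and> shift c' r \<in> boxes la) \<and> fst c' < fst c) \<or>
        (shift c r \<in> boxes la \<and> shift c' r \<in> boxes la \<and> \<tau> (shift c' r) < \<tau> (shift c r)))"

definition inv_count :: "nat list \<Rightarrow> (box \<Rightarrow> nat) \<Rightarrow> nat" where
  "inv_count la \<tau> = card {(c, c'). inversion_pair la \<tau> c c'}"

definition S_k :: "nat list \<Rightarrow> nat \<Rightarrow> (box \<Rightarrow> nat) set" where
  "S_k la k = {\<tau>. row_standard la \<tau> \<and> inv_count la \<tau> = k}"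

definition st :: "nat list \<Rightarrow> (box \<Rightarrow> nat) \<Rightarrow> (box \<Rightarrow> nat)" where
  "st la \<tau> = (\<lambda>(i, j). if (i, j) \<in> boxes la
       then sorted_list_of_set (\<tau> ` {c \<in> boxes la. snd c = j}) ! i else 0)"

definition S_k_T :: "nat list \<Rightarrow> nat \<Rightarrow> (box \<Rightarrow> nat) \<Rightarrow> (box \<Rightarrow> nat) set" where
  "S_k_T la k T = {\<tau> \<in> S_k la k. st la \<tau> = T}"

end

theory Submission
  imports Defs "HOL-Computational_Algebra.Polynomial" "HOL-Library.FuncSet"
begin

definition lc :: "(int \<Rightarrow> nat) \<Rightarrow> bool" where
  "lc f \<longleftrightarrow> (\<forall>i. f (i - 1) * f (i + 1) \<le> f i * f i)"
definition niz :: "(int \<Rightarrow> nat) \<Rightarrow> bool" where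
  "niz f \<longleftrightarrow> (\<forall>i j l. i \<le> j \<longrightarrow> j \<le> l \<longrightarrow> 0 < f i \<longrightarrow> 0 < f l \<longrightarrow> 0 < f j)"

lemma strong_lc_aux:
  assumes "lc f" "niz f"
  shows "f (i - 1) * f (i + int d + 1) \<le> f i * f (i + int d)"
proof (induction d)
  case 0
  then show ?case using assms(1) unfolding lc_def by simp
next
  case (Suc d)
  let ?j = "i + int d"
  have IH: "f (i - 1) * f (?j + 1) \<le> f i * f ?j" using Suc by simp
  have L: "f ?j * f (?j + 2) \<le> f (?j+1) * f (?j+1)"
    using assms(1) unfolding lc_def by (metis add.commute add_diff_cancel_left' one_add_one add.left_commute)
  have e: "i + int (Suc d) + 1 = ?j + 2" "i + int (Suc d) = ?j + 1" by simp_all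
  have "f (i - 1) * f (?j + 2) \<le> f i * f (?j+1)"
  proof (cases "f (i - 1) = 0 \<or> f (?j + 2) = 0")
    case True
    then show ?thesis by (metis le0 mult_is_0)
  next
    case False
    then have p1: "0 < f (i - 1)" and p2: "0 < f (?j + 2)" by auto
    have pj: "0 < f ?j" using assms(2) p1 p2 unfolding niz_def by (elim allE[of _ "i - 1"] allE[of _ "?j"] allE[of _ "?j+2"]) simp
    have pj1: "0 < f (?j+1)" using assms(2) p1 p2 unfolding niz_def by (elim allE[of _ "i - 1"] allE[of _ "?j+1"] allE[of _ "?j+2"]) simp
    have "f (i - 1) * f (?j + 2) * (f ?j * f (?j+1)) = (f (i - 1) * f (?j + 1)) * (f ?j * f (?j + 2))"
      by (simp add: ac_simps)
    also have "\<dots> \<le> (f i * f ?j) * (f (?j+1) * f (?j+1))"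
      using IH L by (rule mult_le_mono)
    also have "\<dots> = (f i * f (?j+1)) * (f ?j * f (?j+1))" by (simp add: ac_simps)
    finally have "f (i - 1) * f (?j + 2) \<le> f i * f (?j+1)"
      using pj pj1 by (metis mult_le_cancel2 nat_0_less_mult_iff)
    then show ?thesis .
  qed
  then show ?case using e by metis
qed

lemma strong_lc:
  assumes "lc f" "niz f" "i \<le> j"
  shows "f (i - 1) * f (j + 1) \<le> f i * f j"
  using strong_lc_aux[OF assms(1,2), of i "nat (j - i)"] assms(3) by simp

lemma window_lc:
  assumes "lc f" "niz f" "1 \<le> m"
  shows "lc (\<lambda>n. \<Sum>t<m. f (n - int t))"
  unfolding lc_def
proof
  fix n :: int
  obtain m' where m: "m = Suc m'" using assms(3) by (cases m) auto
  define x where "x = (\<lambda>t::int. int (f (n - t)))"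
  define S where "S = (\<Sum>t<m. x (int t))"
  have b0: "int (\<Sum>t<m. f (n - int t)) = S" unfolding S_def x_def by simp
  have b1: "int (\<Sum>t<m. f (n - 1 - int t)) = (\<Sum>t<m. x (int t + 1))" unfolding x_def
    by (simp add: algebra_simps)
  have b2: "int (\<Sum>t<m. f (n + 1 - int t)) = (\<Sum>t<m. x (int t - 1))" unfolding x_def
    by (simp add: algebra_simps)
  have sh: "S = x 0 + (\<Sum>t<m'. x (int t + 1))" unfolding S_def m
    by (subst sum.lessThan_Suc_shift) (simp add: add.commute)
  have A1: "(\<Sum>t<m'. x (int t)) = S - x (int m')" unfolding S_def m by simp
  have A2: "(\<Sum>t<m'. x (int t + 1)) = S - x 0" using sh by simp
  have A3: "(\<Sum>t<m. x (int t + 1)) = S - x 0 + x (int m' + 1)" using A2 unfolding m by simp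
  have A4: "(\<Sum>t<m. x (int t - 1)) = x (-1) + S - x (int m')" unfolding m
    by (subst sum.lessThan_Suc_shift) (simp add: A1)
  define G1 where "G1 = (\<Sum>t<m'. x 0 * x (int t) - x (-1) * x (int t + 1))"
  define G2 where "G2 = (\<Sum>s<m. x (int s) * x (int m') - x (int s - 1) * x (int m' + 1))"
  have G1c: "G1 = x 0 * (S - x (int m')) - x (-1) * (S - x 0)"
    unfolding G1_def sum_subtractf sum_distrib_left[symmetric] A1 A2 by simp
  have G2c: "G2 = x (int m') * S - x (int m' + 1) * (x (-1) + S - x (int m'))"
    unfolding G2_def sum_subtractf sum_distrib_right[symmetric] A4 by (simp add: S_def)
  have G1p: "0 \<le> G1" unfolding G1_def
  proof (rule sum_nonneg)
    fix t assume "t \<in> {..<m'}"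
    have "f (n - int t - 1) * f (n + 1) \<le> f (n - int t) * f n"
      using strong_lc[OF assms(1,2), of "n - int t" n] by simp
    then have "int (f (n + 1)) * int (f (n - int t - 1)) \<le> int (f n) * int (f (n - int t))"
      by (metis (mono_tags) of_nat_le_iff of_nat_mult mult.commute)
    then show "0 \<le> x 0 * x (int t) - x (-1) * x (int t + 1)" unfolding x_def by (simp add: algebra_simps)
  qed
  have G2p: "0 \<le> G2" unfolding G2_def
  proof (rule sum_nonneg)
    fix s assume "s \<in> {..<m}"
    then have "s \<le> m'" using m by simp
    then have "f (n - int m' - 1) * f (n - int s + 1) \<le> f (n - int m') * f (n - int s)"
      using strong_lc[OF assms(1,2), of "n - int m'" "n - int s"] by simp
    then have "int (f (n - int m' - 1)) * int (f (n - int s + 1)) \<le> int (f (n - int m')) * int (f (n - int s))"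
      by (metis (mono_tags) of_nat_le_iff of_nat_mult)
    then show "0 \<le> x (int s) * x (int m') - x (int s - 1) * x (int m' + 1)" unfolding x_def
      by (simp add: algebra_simps)
  qed
  have "S * S - (\<Sum>t<m. x (int t + 1)) * (\<Sum>t<m. x (int t - 1)) = G1 + G2"
    unfolding A3 A4 G1c G2c by (simp add: algebra_simps)
  then have "(\<Sum>t<m. x (int t + 1)) * (\<Sum>t<m. x (int t - 1)) \<le> S * S" using G1p G2p by simp
  then have "int ((\<Sum>t<m. f (n - 1 - int t)) * (\<Sum>t<m. f (n + 1 - int t))) \<le> int ((\<Sum>t<m. f (n - int t)) * (\<Sum>t<m. f (n - int t)))"
    unfolding of_nat_mult b0 b1 b2 .
  then show "(\<Sum>t<m. f (n - 1 - int t)) * (\<Sum>t<m. f (n + 1 - int t)) \<le> (\<Sum>t<m. f (n - int t)) * (\<Sum>t<m. f (n - int t))"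
    by linarith
qed

lemma sum_pos_ex:
  fixes g :: "nat \<Rightarrow> nat"
  assumes "0 < (\<Sum>t<m. g t)" shows "\<exists>t<m. 0 < g t"
proof (rule ccontr)
  assume "\<not> (\<exists>t<m. 0 < g t)"
  then have "(\<Sum>t<m. g t) = 0" by (intro sum.neutral) auto
  with assms show False by simp
qed

lemma niz_between:
  assumes "niz f" "0 < f a" "0 < f b" "min a b \<le> p" "p \<le> max a b"
  shows "0 < f p"
proof (cases "a \<le> b")
  case True
  then show ?thesis using assms unfolding niz_def min_def max_def
    by (elim allE[of _ a] allE[of _ p] allE[of _ b]) simp
next
  case False
  then show ?thesis using assms unfolding niz_def min_def max_def
    by (elim allE[of _ b] allE[of _ p] allE[of _ a]) simp
qed

lemma window_niz:
  assumes "niz f"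
  shows "niz (\<lambda>n. \<Sum>t<m. f (n - int t))"
  unfolding niz_def
proof (intro allI impI)
  fix i j l :: int
  assume ij: "i \<le> j" and jl: "j \<le> l" and pi: "0 < (\<Sum>t<m. f (i - int t))" and pl: "0 < (\<Sum>t<m. f (l - int t))"
  obtain t1 where t1: "t1 < m" "0 < f (i - int t1)" using sum_pos_ex[OF pi] by blast
  obtain t2 where t2: "t2 < m" "0 < f (l - int t2)" using sum_pos_ex[OF pl] by blast
  have nz: "\<And>p. min (i - int t1) (l - int t2) \<le> p \<Longrightarrow> p \<le> max (i - int t1) (l - int t2) \<Longrightarrow> 0 < f p"
    using niz_between[OF assms] t1 t2 by blast
  obtain t where t: "t < m" "min (i - int t1) (l - int t2) \<le> j - int t" "j - int t \<le> max (i - int t1) (l - int t2)"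
  proof (cases "j - int t1 \<le> l - int t2")
    case True then show ?thesis using that[of t1] t1 ij by simp
  next
    case F1: False
    show ?thesis
    proof (cases "i - int t1 \<le> j - int t2")
      case True then show ?thesis using that[of t2] t2 jl by simp
    next
      case False
      define t where "t = nat (j - (i - int t1))"
      have "int t = j - (i - int t1)" unfolding t_def using ij by simp
      moreover have "t < t2" using False F1 calculation by linarith
      ultimately show ?thesis using that[of t] t2 by simp
    qed
  qed
  have "0 < f (j - int t)" using nz t by simp
  then show "0 < (\<Sum>t<m. f (j - int t))"
    using t(1) member_le_sum[of t "{..<m}" "\<lambda>t. f (j - int t)"] by simp
qed


definition seq :: "nat poly \<Rightarrow> int \<Rightarrow> nat" where
  "seq p i = (if i < 0 then 0 else coeff p (nat i))"
lemma lc_niz_one: "lc (seq 1) \<and> niz (seq 1)"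
proof -
  have s: "seq 1 i = (if i = 0 then 1 else 0)" for i
    unfolding seq_def by (auto simp: coeff_1 nat_eq_iff)
  show ?thesis unfolding lc_def niz_def s by auto
qed
definition W :: "nat \<Rightarrow> nat poly" where
  "W m = (\<Sum>i<m. monom 1 i)"

lemma seq_mult_W: "seq (p * W m) n = (\<Sum>t<m. seq p (n - int t))"
proof (cases "n < 0")
  case True
  then show ?thesis unfolding seq_def by simp
next
  case False
  have "coeff (p * W m) (nat n) = (\<Sum>t<m. coeff (monom 1 t * p) (nat n))"
    unfolding W_def sum_distrib_left coeff_sum by (simp add: mult.commute)
  also have "\<dots> = (\<Sum>t<m. seq p (n - int t))"
    unfolding coeff_monom_mult seq_def using False by (intro sum.cong) (auto simp: nat_diff_distrib')
  finally show ?thesis unfolding seq_def using False by simp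
qed


lemma lc_niz_mult_W:
  assumes "lc (seq p)" "niz (seq p)" "1 \<le> m"
  shows "lc (seq (p * W m)) \<and> niz (seq (p * W m))"
proof -
  have e: "seq (p * W m) = (\<lambda>n. \<Sum>t<m. seq p (n - int t))" using seq_mult_W by blast
  show ?thesis unfolding e using window_lc[OF assms] window_niz[OF assms(2)] by blast
qed

lemma lc_niz_prod_W:
  assumes "finite I" "\<And>i. i \<in> I \<Longrightarrow> 1 \<le> g i"
  shows "lc (seq (\<Prod>i\<in>I. W (g i))) \<and> niz (seq (\<Prod>i\<in>I. W (g i)))"
  using assms
proof (induction I rule: finite_induct)
  case empty
  then show ?case using lc_niz_one by simp
next
  case (insert x F)
  then have "lc (seq ((\<Prod>i\<in>F. W (g i)) * W (g x))) \<and> niz (seq ((\<Prod>i\<in>F. W (g i)) * W (g x)))"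
    by (intro lc_niz_mult_W) auto
  then show ?case using insert by (simp add: mult.commute)
qed

definition gen :: "'a set \<Rightarrow> ('a \<Rightarrow> nat) \<Rightarrow> nat poly" where
  "gen A w = (\<Sum>x\<in>A. monom 1 (w x))"

lemma coeff_gen: "finite A \<Longrightarrow> coeff (gen A w) k = card {x\<in>A. w x = k}"
proof -
  assume f: "finite A"
  have "coeff (gen A w) k = (\<Sum>x\<in>A. if w x = k then 1 else 0)"
    unfolding gen_def coeff_sum by (intro sum.cong) auto
  also have "\<dots> = (\<Sum>x\<in>{x\<in>A. w x = k}. 1)"
    using f by (simp only: sum.inter_filter)
  finally show ?thesis by (simp del: One_nat_def)
qed

lemma gen_bij:
  assumes "bij_betw f A B" "\<And>x. x \<in> A \<Longrightarrow> w' (f x) = w x"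
  shows "gen B w' = gen A w"
proof -
  have "gen B w' = (\<Sum>x\<in>A. monom 1 (w' (f x)))"
    unfolding gen_def using sum.reindex_bij_betw[OF assms(1), of "\<lambda>y. monom 1 (w' y)"] by (rule sym)
  also have "\<dots> = gen A w" unfolding gen_def using assms(2) by (intro sum.cong) auto
  finally show ?thesis .
qed

lemma prod_monom1: "finite I \<Longrightarrow> (\<Prod>i\<in>I. monom (1::nat) (f i)) = monom 1 (\<Sum>i\<in>I. f i)"
  by (induction I rule: finite_induct) (auto simp: mult_monom simp del: One_nat_def)

lemma gen_PiE:
  assumes "finite I" "\<And>i. i \<in> I \<Longrightarrow> finite (A i)"
  shows "gen (PiE I A) (\<lambda>g. \<Sum>i\<in>I. w i (g i)) = (\<Prod>i\<in>I. gen (A i) (w i))"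
proof -
  have "(\<Prod>i\<in>I. gen (A i) (w i)) = (\<Sum>g\<in>PiE I A. \<Prod>i\<in>I. monom 1 (w i (g i)))"
    unfolding gen_def by (rule prod_sum_PiE) (use assms in auto)
  also have "\<dots> = gen (PiE I A) (\<lambda>g. \<Sum>i\<in>I. w i (g i))"
    unfolding gen_def by (intro sum.cong refl prod_monom1[OF assms(1)])
  finally show ?thesis by (rule sym)
qed

definition perms :: "nat \<Rightarrow> nat list set" where
  "perms h = {s. distinct s \<and> set s = {0..<h}}"

fun invl :: "nat list \<Rightarrow> nat" where
  "invl [] = 0"
| "invl (x # xs) = length (filter (\<lambda>y. y < x) xs) + invl xs"

definition Q :: "nat \<Rightarrow> (nat \<Rightarrow> nat) \<Rightarrow> nat list set" where
  "Q h c = {s \<in> perms h. \<forall>k<h. s ! k < c k}"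

definition ins :: "nat \<Rightarrow> nat \<Rightarrow> nat" where "ins a v = (if a \<le> v then Suc v else v)"
definition del :: "nat \<Rightarrow> nat \<Rightarrow> nat" where "del a v = (if a < v then v - 1 else v)"

lemma length_perms: "s \<in> perms h \<Longrightarrow> length s = h"
  unfolding perms_def using distinct_card by fastforce

lemma finite_perms: "finite (perms h)"
proof -
  have "perms h \<subseteq> {xs. set xs \<subseteq> {0..<h} \<and> length xs = h}"
    using length_perms unfolding perms_def by auto
  then show ?thesis using finite_lists_length_eq[OF finite_atLeastLessThan] finite_subset by blast
qed

lemma finite_Q: "finite (Q h c)"
  unfolding Q_def using finite_perms by simp

lemma invl_map_mono:
  assumes "strict_mono f" shows "invl (map f xs) = invl xs"
  by (induction xs) (auto simp: filter_map o_def strict_mono_less[OF assms])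

lemma ins_mono: "strict_mono (ins a)"
  unfolding strict_mono_def ins_def by auto

lemma ins_image: "a \<le> h \<Longrightarrow> ins a ` {0..<h} = {0..<Suc h} - {a}"
proof (intro equalityI subsetI)
  fix v assume "a \<le> h" "v \<in> {0..<Suc h} - {a}"
  then have "v = ins a (if v < a then v else v - 1)" "(if v < a then v else v - 1) \<in> {0..<h}"
    unfolding ins_def by auto
  then show "v \<in> ins a ` {0..<h}" by blast
qed (auto simp: ins_def)

lemma del_image: "x < Suc h \<Longrightarrow> del x ` ({0..<Suc h} - {x}) = {0..<h}"
proof (intro equalityI subsetI)
  fix v assume "x < Suc h" "v \<in> {0..<h}"
  then have "v = del x (ins x v)" "ins x v \<in> {0..<Suc h} - {x}"
    unfolding ins_def del_def by auto
  then show "v \<in> del x ` ({0..<Suc h} - {x})" by blast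
qed (auto simp: del_def)

lemma gen_times:
  assumes "finite A" "finite B"
  shows "gen (A \<times> B) (\<lambda>(a, b). wa a + wb b) = gen A wa * gen B wb"
proof -
  have "gen A wa * gen B wb = (\<Sum>a\<in>A. \<Sum>b\<in>B. monom 1 (wa a) * monom 1 (wb b))"
    unfolding gen_def sum_product ..
  also have "\<dots> = (\<Sum>a\<in>A. \<Sum>b\<in>B. monom 1 (wa a + wb b))"
    by (simp only: mult_monom mult_1)
  also have "\<dots> = gen (A \<times> B) (\<lambda>(a, b). wa a + wb b)"
    unfolding gen_def sum.cartesian_product by (simp add: case_prod_beta)
  finally show ?thesis by (rule sym)
qed

lemma W_gen: "W m = gen {..<m} id"
  unfolding W_def gen_def by simp

lemma Q_step:
  assumes c: "\<forall>k<Suc h. k < c k \<and> c k \<le> Suc h" "\<forall>k. Suc k < Suc h \<longrightarrow> c k \<le> c (Suc k)"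
  defines "c' \<equiv> \<lambda>k. c (Suc k) - 1"
  shows "bij_betw (\<lambda>(a, s). a # map (ins a) s) ({..<c 0} \<times> Q h c') (Q (Suc h) c)"
proof (rule bij_betw_byWitness[where f' = "\<lambda>s. (hd s, map (del (hd s)) (tl s))"])
  show "\<forall>p\<in>{..<c 0} \<times> Q h c'. (\<lambda>s. (hd s, map (del (hd s)) (tl s))) ((\<lambda>(a, s). a # map (ins a) s) p) = p"
    by (auto simp: del_def ins_def map_idI)
  show "\<forall>s\<in>Q (Suc h) c. (\<lambda>(a, s). a # map (ins a) s) ((\<lambda>s. (hd s, map (del (hd s)) (tl s))) s) = s"
  proof
    fix s assume s: "s \<in> Q (Suc h) c"
    then have "length s = Suc h" unfolding Q_def using length_perms by blast
    then obtain x xs where sx: "s = x # xs" by (cases s) auto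
    have "x \<notin> set xs" using s sx unfolding Q_def perms_def by auto
    then have "map (ins x) (map (del x) xs) = xs"
      by (induction xs) (auto simp: ins_def del_def)
    then show "(\<lambda>(a, s). a # map (ins a) s) ((\<lambda>s. (hd s, map (del (hd s)) (tl s))) s) = s"
      using sx by simp
  qed
  show "(\<lambda>(a, s). a # map (ins a) s) ` ({..<c 0} \<times> Q h c') \<subseteq> Q (Suc h) c"
  proof clarify
    fix a s assume a: "a < c 0" and s: "s \<in> Q h c'"
    have ah: "a \<le> h" using a c(1) by (metis less_Suc_eq_le order.strict_trans2 zero_less_Suc)
    have sp: "distinct s" "set s = {0..<h}" "length s = h" using s length_perms[of s h] unfolding Q_def perms_def by auto
    have sb: "\<forall>k<h. s ! k < c' k" using s unfolding Q_def by auto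
    have "distinct (map (ins a) s)" using sp(1) strict_mono_imp_inj_on[OF ins_mono] 
      by (simp add: distinct_map inj_on_subset)
    moreover have "a \<notin> set (map (ins a) s)" by (auto simp: ins_def)
    moreover have "set (map (ins a) s) = {0..<Suc h} - {a}" using ins_image[OF ah] sp(2) by simp
    ultimately have "a # map (ins a) s \<in> perms (Suc h)" unfolding perms_def using ah by auto
    moreover have "\<forall>k<Suc h. (a # map (ins a) s) ! k < c k"
    proof (intro allI impI)
      fix k assume k: "k < Suc h"
      show "(a # map (ins a) s) ! k < c k"
      proof (cases k)
        case 0 then show ?thesis using a by simp
      next
        case (Suc k')
        then have k': "k' < h" using k by simp
        have v: "s ! k' < c (Suc k') - 1" using sb k' unfolding c'_def by simp
        have m: "c 0 \<le> c (Suc k')"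
        proof -
          have "\<forall>j. j \<le> k' \<longrightarrow> c 0 \<le> c (Suc j)"
          proof (intro allI impI)
            fix j assume "j \<le> k'" then show "c 0 \<le> c (Suc j)"
              using k' c(2) by (induction j) (auto intro: order.trans)
          qed
          then show ?thesis by simp
        qed
        show ?thesis using Suc k' sp(3) v m a unfolding ins_def by auto
      qed
    qed
    ultimately show "a # map (ins a) s \<in> Q (Suc h) c" unfolding Q_def by blast
  qed
  show "(\<lambda>s. (hd s, map (del (hd s)) (tl s))) ` Q (Suc h) c \<subseteq> {..<c 0} \<times> Q h c'"
  proof (rule image_subsetI)
    fix s assume s: "s \<in> Q (Suc h) c"
    then have len: "length s = Suc h" unfolding Q_def using length_perms by blast
    then obtain x xs where sx: "s = x # xs" by (cases s) auto
    have sp: "distinct (x # xs)" "set (x # xs) = {0..<Suc h}" using s sx unfolding Q_def perms_def by auto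
    have sb: "\<forall>k<Suc h. (x # xs) ! k < c k" using s sx unfolding Q_def by auto
    have x0: "x < c 0" using sb by auto
    have xh: "x < Suc h" using sp(2) by auto
    have "distinct (map (del x) xs)"
    proof -
      have "inj_on (del x) (set xs)"
      proof (rule inj_onI)
        fix u v assume uv: "u \<in> set xs" "v \<in> set xs" "del x u = del x v"
        moreover have "u \<noteq> x" "v \<noteq> x" using sp(1) uv by auto
        ultimately show "u = v" unfolding del_def by (auto split: if_splits)
      qed
      then show ?thesis using sp(1) by (simp add: distinct_map)
    qed
    moreover have "set (map (del x) xs) = {0..<h}"
    proof -
      have "set xs = {0..<Suc h} - {x}" using sp by auto
      then show ?thesis using del_image[OF xh] by simp
    qed
    ultimately have P: "map (del x) xs \<in> perms h" unfolding perms_def by auto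
    have "\<forall>k<h. map (del x) xs ! k < c' k"
    proof (intro allI impI)
      fix k assume k: "k < h"
      have lx: "length xs = h" using len sx by simp
      have v: "xs ! k < c (Suc k)" using sb k by auto
      have ne: "xs ! k \<noteq> x" using sp(1) k lx by (auto simp: nth_mem)
      have m: "c 0 \<le> c (Suc k)"
      proof -
        have "\<forall>j. j \<le> k \<longrightarrow> c 0 \<le> c (Suc j)"
        proof (intro allI impI)
          fix j assume "j \<le> k" then show "c 0 \<le> c (Suc j)"
            using k c(2) by (induction j) (auto intro: order.trans)
        qed
        then show ?thesis by simp
      qed
      show "map (del x) xs ! k < c' k" using v ne m x0 k lx unfolding c'_def del_def by auto
    qed
    then show "(hd s, map (del (hd s)) (tl s)) \<in> {..<c 0} \<times> Q h c'"
      using P x0 sx unfolding Q_def by auto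
  qed
qed

lemma invl_step:
  assumes "a \<le> h" "s \<in> perms h"
  shows "invl (a # map (ins a) s) = a + invl s"
proof -
  have d: "distinct s" "set s = {0..<h}" using assms(2) unfolding perms_def by auto
  have "length (filter (\<lambda>y. y < a) (map (ins a) s)) = length (filter (\<lambda>v. v < a) s)"
    by (simp add: filter_map o_def ins_def not_le)
  also have "\<dots> = card ({v. v < a} \<inter> {0..<h})" using distinct_length_filter[OF d(1)] d(2) by simp
  also have "{v. v < a} \<inter> {0..<h} = {0..<a}" using assms(1) by auto
  finally show ?thesis using invl_map_mono[OF ins_mono] by simp
qed

lemma perms_0: "perms 0 = {[]}" unfolding perms_def by auto

lemma gen_Q:
  assumes "\<forall>k<h. k < c k \<and> c k \<le> h" "\<forall>k. Suc k < h \<longrightarrow> c k \<le> c (Suc k)"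
  shows "gen (Q h c) invl = (\<Prod>k<h. W (c k - k))"
  using assms
proof (induction h arbitrary: c)
  case 0
  have "Q 0 c = {[]}" unfolding Q_def perms_0 by auto
  then show ?case unfolding gen_def by (simp del: One_nat_def)
next
  case (Suc h)
  define c' where "c' = (\<lambda>k. c (Suc k) - 1)"
  have h1: "\<forall>k<h. k < c' k \<and> c' k \<le> h" using Suc.prems(1) unfolding c'_def
    by (metis Suc_less_eq diff_Suc_1 diff_le_mono less_diff_conv Suc_eq_plus1)
  have h2: "\<forall>k. Suc k < h \<longrightarrow> c' k \<le> c' (Suc k)" using Suc.prems(2) unfolding c'_def
    by (simp add: diff_le_mono)
  have IH: "gen (Q h c') invl = (\<Prod>k<h. W (c' k - k))" using Suc.IH[OF h1 h2] .
  have bij: "bij_betw (\<lambda>(a, s). a # map (ins a) s) ({..<c 0} \<times> Q h c') (Q (Suc h) c)"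
    using Q_step[OF Suc.prems] unfolding c'_def by simp
  have "gen (Q (Suc h) c) invl = gen ({..<c 0} \<times> Q h c') (\<lambda>(a, s). id a + invl s)"
  proof (rule gen_bij[OF bij])
    fix p assume p: "p \<in> {..<c 0} \<times> Q h c'"
    then obtain a s where ps: "p = (a, s)" "a < c 0" "s \<in> Q h c'" by auto
    have "a \<le> h" using ps(2) Suc.prems(1) by (metis less_Suc_eq_le order.strict_trans2 zero_less_Suc)
    then show "invl ((\<lambda>(a, s). a # map (ins a) s) p) = (\<lambda>(a, s). id a + invl s) p"
      using ps invl_step[of a h s] unfolding Q_def by simp
  qed
  also have "\<dots> = W (c 0) * gen (Q h c') invl"
    using gen_times[of "{..<c 0}" "Q h c'" id invl] finite_Q W_gen by simp
  also have "\<dots> = (\<Prod>k<Suc h. W (c k - k))"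
    unfolding IH by (subst prod.lessThan_Suc_shift) (simp add: c'_def)
  finally show ?case .
qed


lemma downclosed_eq:
  assumes "\<And>i i'. i' \<le> i \<Longrightarrow> P i \<Longrightarrow> P i'" "finite {i. P i}"
  shows "{i. P i} = {..<card {i::nat. P i}}"
proof -
  obtain n where n: "\<not> P n" using assms(2) by (metis finite_nat_set_iff_bounded mem_Collect_eq less_irrefl)
  define m where "m = (LEAST i. \<not> P i)"
  have nm: "\<not> P m" unfolding m_def using n by (rule LeastI)
  have "P i \<longleftrightarrow> i < m" for i
  proof
    assume "P i" then show "i < m" using nm assms(1) by (meson not_less)
  next
    assume "i < m" then show "P i" unfolding m_def using not_less_Least by blast
  qed
  then have "{i. P i} = {..<m}" by auto
  then show ?thesis by simp
qed

locale shp =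
  fixes la :: "nat list" and T :: "box \<Rightarrow> nat"
  assumes shape: "is_shape la" and std: "standard la T"
begin

definition hgt :: "nat \<Rightarrow> nat" where "hgt j = length (filter (\<lambda>x. j < x) la)"

definition L :: nat where "L = sum_list la"

lemma boxes_iff: "(i, j) \<in> boxes la \<longleftrightarrow> i < hgt j"
proof -
  have dc: "i' \<le> i \<Longrightarrow> i < length la \<and> j < la ! i \<Longrightarrow> i' < length la \<and> j < la ! i'" for i i'
  proof -
    assume a: "i' \<le> i" "i < length la \<and> j < la ! i"
    have "la ! i \<le> la ! i'"
    proof (cases "i' = i")
      case False
      then have "i' < i" using a by simp
      then show ?thesis using shape a unfolding is_shape_def by (auto simp: sorted_wrt_iff_nth_less)
    qed simp
    then show ?thesis using a by simp
  qed
  have "{i. i < length la \<and> j < la ! i} = {..<card {i. i < length la \<and> j < la ! i}}"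
    by (rule downclosed_eq) (use dc in auto)
  moreover have "hgt j = card {i. i < length la \<and> j < la ! i}"
    unfolding hgt_def by (simp add: length_filter_conv_card)
  ultimately have "{i. i < length la \<and> j < la ! i} = {..<hgt j}" by simp
  then show ?thesis unfolding boxes_def by blast
qed

lemma hgt_Suc: "hgt (Suc j) \<le> hgt j"
  unfolding hgt_def by (induction la) auto

lemma hgt_mono: "j \<le> j' \<Longrightarrow> hgt j' \<le> hgt j"
  by (induction j' rule: dec_induct) (auto intro: order.trans[OF hgt_Suc])

lemma hgt_pos_L: "0 < hgt j \<Longrightarrow> j < L"
proof -
  assume "0 < hgt j"
  then have "(0, j) \<in> boxes la" using boxes_iff by simp
  then have "j < la ! 0" "0 < length la" unfolding boxes_def by auto
  moreover have "la ! 0 \<le> sum_list la" using calculation(2) by (simp add: elem_le_sum_list)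
  ultimately show ?thesis unfolding L_def by simp
qed

lemma hgt_L: "L \<le> j \<Longrightarrow> hgt j = 0"
  using hgt_pos_L by fastforce

lemma T_rs: "row_standard la T" using std unfolding standard_def by simp

lemma T_bij: "bij_betw T (boxes la) {1..sum_list la}" using T_rs unfolding row_standard_def by simp

lemma T_inj: "inj_on T (boxes la)" using T_bij bij_betw_def by blast

lemma T_zero: "c \<notin> boxes la \<Longrightarrow> T c = 0" using T_rs unfolding row_standard_def by (cases c) auto

lemma T_row: "i < hgt (Suc j) \<Longrightarrow> T (i, j) < T (i, Suc j)"
  using T_rs boxes_iff unfolding row_standard_def by simp

lemma T_col_Suc: "Suc i < hgt j \<Longrightarrow> T (i, j) < T (Suc i, j)"
  using std boxes_iff unfolding standard_def by simp

lemma T_col: "i < i' \<Longrightarrow> i' < hgt j \<Longrightarrow> T (i, j) < T (i', j)"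
proof (induction i' rule: less_induct)
  case (less i')
  then obtain i'' where i'': "i' = Suc i''" by (cases i') auto
  show ?case
  proof (cases "i = i''")
    case True then show ?thesis using T_col_Suc less i'' by simp
  next
    case False
    then have "T (i, j) < T (i'', j)" using less i'' by simp
    also have "\<dots> < T (i', j)" using T_col_Suc less i'' by simp
    finally show ?thesis .
  qed
qed

lemma T_col_le: "i \<le> i' \<Longrightarrow> i' < hgt j \<Longrightarrow> T (i, j) \<le> T (i', j)"
  using T_col by (cases "i = i'") (auto intro: less_imp_le)

lemma T_col_less_iff: "i < hgt j \<Longrightarrow> i' < hgt j \<Longrightarrow> T (i, j) < T (i', j) \<longleftrightarrow> i < i'"
  using T_col by (metis linorder_neqE_nat not_less_iff_gr_or_eq)


definition col :: "nat \<Rightarrow> box set" where "col j = {c \<in> boxes la. snd c = j}"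

lemma col_eq: "col j = (\<lambda>i. (i, j)) ` {..<hgt j}"
  unfolding col_def using boxes_iff by auto

lemma card_col: "card (col j) = hgt j"
  unfolding col_eq by (subst card_image) (auto simp: inj_on_def)

lemma finite_col: "finite (col j)"
  unfolding col_eq by simp

lemma sorted_T_col: "sorted_list_of_set (T ` col j) = map (\<lambda>i. T (i, j)) [0..<hgt j]"
proof -
  have sw: "sorted_wrt (<) (map (\<lambda>i. T (i, j)) [0..<hgt j])"
    unfolding sorted_wrt_iff_nth_less using T_col by auto
  have st: "set (map (\<lambda>i. T (i, j)) [0..<hgt j]) = T ` col j" unfolding col_eq by auto
  have "distinct (map (\<lambda>i. T (i, j)) [0..<hgt j])" using sw by (simp add: strict_sorted_iff)
  then have "length (map (\<lambda>i. T (i, j)) [0..<hgt j]) = card (T ` col j)"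
    using st distinct_card by metis
  then show ?thesis using sorted_list_of_set_unique[of "T ` col j" "map (\<lambda>i. T (i, j)) [0..<hgt j]"] sw st finite_col
    by simp
qed

lemma st_iff:
  assumes "row_standard la \<tau>"
  shows "st la \<tau> = T \<longleftrightarrow> (\<forall>j. \<tau> ` col j = T ` col j)"
proof
  assume a: "\<forall>j. \<tau> ` col j = T ` col j"
  show "st la \<tau> = T"
  proof
    fix c :: box
    obtain i j where c: "c = (i, j)" by (cases c)
    show "st la \<tau> c = T c"
    proof (cases "c \<in> boxes la")
      case True
      have "st la \<tau> c = sorted_list_of_set (T ` col j) ! i"
        using True a unfolding st_def c col_def by simp
      also have "\<dots> = T (i, j)" unfolding sorted_T_col using True boxes_iff c by simp
      finally show ?thesis using c by simp
    next
      case False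
      then show ?thesis unfolding st_def c using T_zero c by simp
    qed
  qed
next
  assume a: "st la \<tau> = T"
  have inj: "inj_on \<tau> (boxes la)" using assms unfolding row_standard_def bij_betw_def by simp
  show "\<forall>j. \<tau> ` col j = T ` col j"
  proof
    fix j
    have cj: "card (\<tau> ` col j) = hgt j"
      using card_image[OF inj_on_subset[OF inj]] card_col unfolding col_def by auto
    have "T ` col j \<subseteq> \<tau> ` col j"
    proof
      fix v assume "v \<in> T ` col j"
      then obtain i where i: "i < hgt j" "v = T (i, j)" unfolding col_eq by auto
      have "T (i, j) = st la \<tau> (i, j)" using a by simp
      also have "\<dots> = sorted_list_of_set (\<tau> ` col j) ! i"
        unfolding st_def col_def using i boxes_iff by simp
      also have "\<dots> \<in> \<tau> ` col j"
        using i cj finite_col by (metis finite_imageI length_sorted_list_of_set nth_mem set_sorted_list_of_set)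
      finally show "v \<in> \<tau> ` col j" using i by simp
    qed
    moreover have "card (T ` col j) = hgt j"
      using card_image[OF inj_on_subset[OF T_inj]] card_col unfolding col_def by auto
    ultimately show "\<tau> ` col j = T ` col j" using cj finite_col
      by (metis card_subset_eq finite_imageI)
  qed
qed

end

lemma first_diff_1:
  assumes "inj_on \<tau> (boxes la)" "c \<in> boxes la" "c' \<in> boxes la" "c \<noteq> c'" "snd c = snd c'"
  shows "first_diff la \<tau> c c' = 1"
  unfolding first_diff_def
proof (rule Least_equality)
  have "shift c 1 \<noteq> shift c' 1" using assms(4,5) unfolding shift_def by (cases c, cases c') auto
  then show "1 \<le> (1::nat) \<and> \<not> (shift c 1 \<in> boxes la \<and> shift c' 1 \<in> boxes la \<and> \<tau> (shift c 1) = \<tau> (shift c' 1))"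
    using assms(1) by (auto dest: inj_onD)
qed simp


context shp
begin

function rho :: "(nat \<Rightarrow> nat list) \<Rightarrow> nat \<Rightarrow> nat \<Rightarrow> nat" where
  "rho ss j i = (if Suc j < L \<and> i < hgt (Suc j) then ss j ! rho ss (Suc j) i else ss j ! i)"
  by auto
termination by (relation "measure (\<lambda>(ss, j, i). L - j)") auto

declare rho.simps[simp del]

definition pi :: "(nat \<Rightarrow> nat list) \<Rightarrow> nat \<Rightarrow> nat \<Rightarrow> nat" where
  "pi ss j i = (if i < hgt (Suc j) then rho ss (Suc j) i else i)"

lemma rho_pi: "rho ss j i = ss j ! pi ss j i"
proof -
  have "i < hgt (Suc j) \<Longrightarrow> Suc j < L" using hgt_pos_L[of "Suc j"] by simp
  then show ?thesis unfolding pi_def by (subst rho.simps) simp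
qed

definition QQ :: "nat \<Rightarrow> nat list set" where
  "QQ j = {s \<in> perms (hgt j). \<forall>k<hgt (Suc j). T (s ! k, j) < T (k, Suc j)}"

definition PP :: "(nat \<Rightarrow> nat list) set" where
  "PP = PiE {..<L} QQ"

lemma bij_nth_perm: "s \<in> perms h \<Longrightarrow> bij_betw ((!) s) {..<h} {..<h}"
proof -
  assume s: "s \<in> perms h"
  have "length s = h" using length_perms[OF s] .
  moreover have "distinct s" "set s = {0..<h}" using s unfolding perms_def by auto
  moreover have "{0..<h} = {..<h}" by auto
  ultimately show ?thesis by (intro bij_betw_nth) simp_all
qed

lemma pi_bij:
  assumes "bij_betw (rho ss (Suc j)) {..<hgt (Suc j)} {..<hgt (Suc j)}"
  shows "bij_betw (pi ss j) {..<hgt j} {..<hgt j}"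
proof -
  let ?A = "{..<hgt (Suc j)}" and ?B = "{hgt (Suc j)..<hgt j}"
  have e: "{..<hgt j} = ?A \<union> ?B" using hgt_Suc[of j] by auto
  have c1: "bij_betw (pi ss j) ?A ?A \<longleftrightarrow> bij_betw (rho ss (Suc j)) ?A ?A"
    by (rule bij_betw_cong) (simp add: pi_def)
  have c2: "bij_betw (pi ss j) ?B ?B \<longleftrightarrow> bij_betw id ?B ?B"
    by (rule bij_betw_cong) (simp add: pi_def)
  have b1: "bij_betw (pi ss j) ?A ?A" using c1 assms by blast
  have b2: "bij_betw (pi ss j) ?B ?B" using c2 by simp
  have d: "?A \<inter> ?B = {}" by auto
  have "bij_betw (\<lambda>x. if x \<in> ?A then pi ss j x else pi ss j x) (?A \<union> ?B) (?A \<union> ?B)"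
    by (rule bij_betw_disjoint_Un[OF b1 b2 d d])
  then show ?thesis unfolding e by simp
qed

lemma rho_bij:
  assumes "ss \<in> PP"
  shows "bij_betw (rho ss j) {..<hgt j} {..<hgt j}"
proof (cases "j \<le> L")
  case True
  then show ?thesis
  proof (induction j rule: inc_induct)
    case base
    then show ?case using hgt_L by (simp add: bij_betw_def)
  next
    case (step n)
    have sn: "ss n \<in> perms (hgt n)" using assms step(2) unfolding PP_def QQ_def by auto
    have "bij_betw ((!) (ss n) \<circ> pi ss n) {..<hgt n} {..<hgt n}"
      using pi_bij[OF step(3)] bij_nth_perm[OF sn] by (rule bij_betw_trans)
    then show ?case by (rule bij_betw_cong[THEN iffD1, rotated]) (simp add: rho_pi)
  qed
next
  case False
  then show ?thesis using hgt_L by (simp add: bij_betw_def)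
qed

lemma pi_bij': "ss \<in> PP \<Longrightarrow> bij_betw (pi ss j) {..<hgt j} {..<hgt j}"
  using pi_bij rho_bij by blast

lemma rho_lt: "ss \<in> PP \<Longrightarrow> i < hgt j \<Longrightarrow> rho ss j i < hgt j"
  using rho_bij bij_betwE by blast

definition Psi :: "(nat \<Rightarrow> nat list) \<Rightarrow> box \<Rightarrow> nat" where
  "Psi ss = (\<lambda>(i, j). if (i, j) \<in> boxes la then T (rho ss j i, j) else 0)"

definition SS :: "(box \<Rightarrow> nat) set" where
  "SS = {\<tau>. row_standard la \<tau> \<and> st la \<tau> = T}"

lemma Psi_SS:
  assumes ss: "ss \<in> PP"
  shows "Psi ss \<in> SS"
proof -
  define \<beta> where "\<beta> = (\<lambda>(i::nat, j::nat). (rho ss j i, j))"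
  have bimg: "\<beta> ` col j = col j" for j
  proof -
    have "\<beta> ` col j = (\<lambda>i. (i, j)) ` (rho ss j ` {..<hgt j})"
      unfolding col_eq \<beta>_def image_image by simp
    also have "rho ss j ` {..<hgt j} = {..<hgt j}" using rho_bij[OF ss] bij_betw_imp_surj_on by blast
    finally show ?thesis unfolding col_eq .
  qed
  have bb: "bij_betw \<beta> (boxes la) (boxes la)"
  proof -
    have "inj_on \<beta> (boxes la)"
    proof (rule inj_onI)
      fix x y assume "x \<in> boxes la" "y \<in> boxes la" "\<beta> x = \<beta> y"
      moreover obtain i j i' j' where "x = (i, j)" "y = (i', j')" by (cases x, cases y)
      ultimately show "x = y" using rho_bij[OF ss] boxes_iff unfolding \<beta>_def bij_betw_def inj_on_def
        by auto
    qed
    moreover have "\<beta> ` boxes la = boxes la"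
    proof -
      have "boxes la = (\<Union>j. col j)" unfolding col_def by auto
      then show ?thesis using bimg by (simp add: image_UN)
    qed
    ultimately show ?thesis unfolding bij_betw_def by simp
  qed
  have eq: "Psi ss c = (T \<circ> \<beta>) c" if "c \<in> boxes la" for c
    using that unfolding Psi_def \<beta>_def by (cases c) auto
  have rs: "row_standard la (Psi ss)"
    unfolding row_standard_def
  proof (intro conjI allI impI)
    show "bij_betw (Psi ss) (boxes la) {1..sum_list la}"
      using bij_betw_trans[OF bb T_bij] by (rule bij_betw_cong[THEN iffD1, rotated]) (simp add: eq)
  next
    fix c assume "c \<notin> boxes la" then show "Psi ss c = 0" unfolding Psi_def by (cases c) auto
  next
    fix i j assume b: "(i, Suc j) \<in> boxes la"
    then have i1: "i < hgt (Suc j)" using boxes_iff by simp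
    then have i0: "i < hgt j" using hgt_Suc[of j] by simp
    have jL: "j < L" using hgt_pos_L[of "Suc j"] i1 by simp
    have q: "ss j \<in> QQ j" using ss jL unfolding PP_def by auto
    have k: "rho ss (Suc j) i < hgt (Suc j)" using rho_lt[OF ss i1] .
    have "Psi ss (i, j) = T (ss j ! rho ss (Suc j) i, j)"
      unfolding Psi_def using i0 i1 boxes_iff rho_pi[of ss j i] by (simp add: pi_def)
    also have "\<dots> < T (rho ss (Suc j) i, Suc j)" using q k unfolding QQ_def by auto
    also have "\<dots> = Psi ss (i, Suc j)" unfolding Psi_def using b by simp
    finally show "Psi ss (i, j) < Psi ss (i, Suc j)" .
  qed
  have "\<forall>j. Psi ss ` col j = T ` col j"
  proof
    fix j
    have "Psi ss ` col j = (T \<circ> \<beta>) ` col j" by (rule image_cong) (auto simp: col_def eq)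
    then show "Psi ss ` col j = T ` col j" unfolding image_comp[symmetric] bimg .
  qed
  then show ?thesis using st_iff[OF rs] rs unfolding SS_def by simp
qed

end

context shp
begin

lemma Psi_inj: "inj_on Psi PP"
proof (rule inj_onI)
  fix ss ss' assume ss: "ss \<in> PP" and ss': "ss' \<in> PP" and eq: "Psi ss = Psi ss'"
  have R: "rho ss j i = rho ss' j i" if i: "i < hgt j" for j i
  proof -
    have b: "(i, j) \<in> boxes la" using i boxes_iff by simp
    have "T (rho ss j i, j) = T (rho ss' j i, j)" using fun_cong[OF eq, of "(i, j)"] b unfolding Psi_def by simp
    moreover have "(rho ss j i, j) \<in> boxes la" "(rho ss' j i, j) \<in> boxes la"
      using rho_lt[OF ss i] rho_lt[OF ss' i] boxes_iff by auto
    ultimately show ?thesis using T_inj by (auto dest: inj_onD)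
  qed
  have P: "pi ss j i = pi ss' j i" if "i < hgt j" for j i
    unfolding pi_def using R by simp
  show "ss = ss'"
  proof (rule PiE_ext[OF ss[unfolded PP_def] ss'[unfolded PP_def]])
    fix j assume j: "j \<in> {..<L}"
    have "ss j \<in> QQ j" "ss' j \<in> QQ j" using ss ss' j unfolding PP_def by (auto intro: PiE_mem)
    then have l: "length (ss j) = hgt j" "length (ss' j) = hgt j"
      using length_perms unfolding QQ_def by auto
    show "ss j = ss' j"
    proof (rule nth_equalityI)
      show "length (ss j) = length (ss' j)" using l by simp
    next
      fix k assume "k < length (ss j)"
      then have k: "k < hgt j" using l by simp
      obtain x where x: "x < hgt j" "pi ss j x = k" using pi_bij'[OF ss, of j] k
        by (metis bij_betw_iff_bijections lessThan_iff)
      have "ss j ! k = rho ss j x" using x rho_pi by simp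
      also have "\<dots> = rho ss' j x" using R x by simp
      also have "\<dots> = ss' j ! k" using x P rho_pi by simp
      finally show "ss j ! k = ss' j ! k" .
    qed
  qed
qed

definition rk :: "(box \<Rightarrow> nat) \<Rightarrow> nat \<Rightarrow> nat \<Rightarrow> nat" where
  "rk \<tau> j i = fst (inv_into (boxes la) T (\<tau> (i, j)))"

definition pinv :: "(box \<Rightarrow> nat) \<Rightarrow> nat \<Rightarrow> nat \<Rightarrow> nat" where
  "pinv \<tau> j k = (if k < hgt (Suc j) then fst (inv_into (boxes la) \<tau> (T (k, Suc j))) else k)"

definition Phi :: "(box \<Rightarrow> nat) \<Rightarrow> nat \<Rightarrow> nat list" where
  "Phi \<tau> = (\<lambda>j. if j < L then map (\<lambda>k. rk \<tau> j (pinv \<tau> j k)) [0..<hgt j] else undefined)"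

lemma SS_inj: "\<tau> \<in> SS \<Longrightarrow> inj_on \<tau> (boxes la)"
  unfolding SS_def row_standard_def bij_betw_def by simp

lemma SS_col: "\<tau> \<in> SS \<Longrightarrow> \<tau> ` col j = T ` col j"
  using st_iff unfolding SS_def by blast

lemma rk1:
  assumes t: "\<tau> \<in> SS" and i: "i < hgt j"
  shows "rk \<tau> j i < hgt j \<and> T (rk \<tau> j i, j) = \<tau> (i, j)"
proof -
  have "\<tau> (i, j) \<in> \<tau> ` col j" using i unfolding col_eq by auto
  then obtain i' where i': "i' < hgt j" "\<tau> (i, j) = T (i', j)" using SS_col[OF t] unfolding col_eq by auto
  have "inv_into (boxes la) T (T (i', j)) = (i', j)"
    using i' boxes_iff by (intro inv_into_f_f[OF T_inj]) simp
  then show ?thesis unfolding rk_def using i' by simp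
qed

lemma pinv1:
  assumes t: "\<tau> \<in> SS" and k: "k < hgt (Suc j)"
  shows "pinv \<tau> j k < hgt (Suc j) \<and> \<tau> (pinv \<tau> j k, Suc j) = T (k, Suc j)"
proof -
  have "T (k, Suc j) \<in> T ` col (Suc j)" using k unfolding col_eq by auto
  then have "T (k, Suc j) \<in> \<tau> ` col (Suc j)" using SS_col[OF t] by simp
  then obtain x where x: "x < hgt (Suc j)" "T (k, Suc j) = \<tau> (x, Suc j)" unfolding col_eq by auto
  have "inv_into (boxes la) \<tau> (\<tau> (x, Suc j)) = (x, Suc j)"
    using x boxes_iff by (intro inv_into_f_f[OF SS_inj[OF t]]) simp
  then show ?thesis unfolding pinv_def using x k by simp
qed

lemma pinv_lt: "\<tau> \<in> SS \<Longrightarrow> k < hgt j \<Longrightarrow> pinv \<tau> j k < hgt j"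
  using pinv1 hgt_Suc[of j] by (metis order.strict_trans2 pinv_def)

lemma Phi_PP:
  assumes t: "\<tau> \<in> SS"
  shows "Phi \<tau> \<in> PP"
  unfolding PP_def PiE_iff
proof (intro conjI ballI)
  show "Phi \<tau> \<in> extensional {..<L}" unfolding Phi_def extensional_def by simp
next
  fix j assume "j \<in> {..<L}"
  then have jL: "j < L" by simp
  define f where "f = (\<lambda>k. rk \<tau> j (pinv \<tau> j k))"
  have Pj: "Phi \<tau> j = map f [0..<hgt j]" unfolding Phi_def f_def using jL by simp
  have fr: "f ` {0..<hgt j} \<subseteq> {0..<hgt j}" unfolding f_def using rk1[OF t] pinv_lt[OF t] by auto
  have fi: "inj_on f {0..<hgt j}"
  proof (rule inj_onI)
    fix k k' assume k: "k \<in> {0..<hgt j}" and k': "k' \<in> {0..<hgt j}" and e: "f k = f k'"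
    have x: "pinv \<tau> j k < hgt j" "pinv \<tau> j k' < hgt j" using pinv_lt[OF t] k k' by auto
    have "\<tau> (pinv \<tau> j k, j) = \<tau> (pinv \<tau> j k', j)"
      using e rk1[OF t x(1)] rk1[OF t x(2)] unfolding f_def by metis
    then have xe: "pinv \<tau> j k = pinv \<tau> j k'"
      using SS_inj[OF t] x boxes_iff by (auto dest: inj_onD)
    show "k = k'"
    proof (cases "k < hgt (Suc j)"; cases "k' < hgt (Suc j)")
      assume a: "k < hgt (Suc j)" "k' < hgt (Suc j)"
      have "T (k, Suc j) = T (k', Suc j)" using pinv1[OF t a(1)] pinv1[OF t a(2)] xe by metis
      then show ?thesis using T_inj a boxes_iff by (auto dest: inj_onD)
    next
      assume a: "k < hgt (Suc j)" "\<not> k' < hgt (Suc j)"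
      then show ?thesis using pinv1[OF t a(1)] xe unfolding pinv_def by simp
    next
      assume a: "\<not> k < hgt (Suc j)" "k' < hgt (Suc j)"
      then show ?thesis using pinv1[OF t a(2)] xe unfolding pinv_def by simp
    next
      assume a: "\<not> k < hgt (Suc j)" "\<not> k' < hgt (Suc j)"
      then show ?thesis using xe unfolding pinv_def by simp
    qed
  qed
  have fs: "f ` {0..<hgt j} = {0..<hgt j}" using endo_inj_surj[OF _ fr fi] by simp
  have perm: "Phi \<tau> j \<in> perms (hgt j)" unfolding perms_def Pj using fi fs by (simp add: distinct_map)
  have "\<forall>k<hgt (Suc j). T (Phi \<tau> j ! k, j) < T (k, Suc j)"
  proof (intro allI impI)
    fix k assume k: "k < hgt (Suc j)"
    have kj: "k < hgt j" using k hgt_Suc[of j] by simp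
    have x: "pinv \<tau> j k < hgt (Suc j)" "\<tau> (pinv \<tau> j k, Suc j) = T (k, Suc j)" using pinv1[OF t k] by auto
    have xj: "pinv \<tau> j k < hgt j" using x(1) hgt_Suc[of j] by simp
    have "T (Phi \<tau> j ! k, j) = \<tau> (pinv \<tau> j k, j)" unfolding Pj f_def using kj rk1[OF t xj] by simp
    also have "\<dots> < \<tau> (pinv \<tau> j k, Suc j)"
      using t x(1) boxes_iff unfolding SS_def row_standard_def by simp
    finally show "T (Phi \<tau> j ! k, j) < T (k, Suc j)" using x(2) by simp
  qed
  then show "Phi \<tau> j \<in> QQ j" unfolding QQ_def using perm by simp
qed

lemma rho_Phi:
  assumes t: "\<tau> \<in> SS" and i: "i < hgt j"
  shows "rho (Phi \<tau>) j i = rk \<tau> j i"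
proof -
  have jL: "j \<le> L" using hgt_pos_L[of j] i by simp
  have "\<forall>i<hgt j. rho (Phi \<tau>) j i = rk \<tau> j i" using jL
  proof (induction j rule: inc_induct)
    case base then show ?case using hgt_L by simp
  next
    case (step n)
    show ?case
    proof (intro allI impI)
      fix i assume i: "i < hgt n"
      have Pn: "Phi \<tau> n = map (\<lambda>k. rk \<tau> n (pinv \<tau> n k)) [0..<hgt n]" unfolding Phi_def using step(2) by simp
      show "rho (Phi \<tau>) n i = rk \<tau> n i"
      proof (cases "i < hgt (Suc n)")
        case True
        define y where "y = rk \<tau> (Suc n) i"
        have y: "y < hgt (Suc n)" "T (y, Suc n) = \<tau> (i, Suc n)" using rk1[OF t True] unfolding y_def by auto
        have yn: "y < hgt n" using y(1) hgt_Suc[of n] by simp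
        have pi: "pi (Phi \<tau>) n i = y" unfolding pi_def y_def using True step(3) by simp
        have "inv_into (boxes la) \<tau> (\<tau> (i, Suc n)) = (i, Suc n)"
          using True boxes_iff by (intro inv_into_f_f[OF SS_inj[OF t]]) simp
        then have "pinv \<tau> n y = i" unfolding pinv_def using y by simp
        then show ?thesis using rho_pi[of "Phi \<tau>" n i] pi Pn yn by simp
      next
        case False
        have pi: "pi (Phi \<tau>) n i = i" unfolding pi_def using False by simp
        have "pinv \<tau> n i = i" unfolding pinv_def using False by simp
        then show ?thesis using rho_pi[of "Phi \<tau>" n i] pi Pn i by simp
      qed
    qed
  qed
  then show ?thesis using i by simp
qed

lemma Psi_Phi:
  assumes t: "\<tau> \<in> SS" shows "Psi (Phi \<tau>) = \<tau>"
proof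
  fix c :: box
  obtain i j where c: "c = (i, j)" by (cases c)
  show "Psi (Phi \<tau>) c = \<tau> c"
  proof (cases "c \<in> boxes la")
    case True
    then have i: "i < hgt j" using boxes_iff c by simp
    show ?thesis unfolding Psi_def c using True c rho_Phi[OF t i] rk1[OF t i] by simp
  next
    case False
    then show ?thesis unfolding Psi_def c using t c unfolding SS_def row_standard_def by simp
  qed
qed

lemma Psi_bij: "bij_betw Psi PP SS"
  unfolding bij_betw_def
proof
  show "inj_on Psi PP" by (rule Psi_inj)
  show "Psi ` PP = SS"
  proof
    show "Psi ` PP \<subseteq> SS" using Psi_SS by blast
    show "SS \<subseteq> Psi ` PP"
    proof
      fix \<tau> assume "\<tau> \<in> SS"
      then show "\<tau> \<in> Psi ` PP" using Psi_Phi Phi_PP by (metis image_eqI)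
    qed
  qed
qed

end

definition invset :: "nat list \<Rightarrow> (nat \<times> nat) set" where
  "invset s = {(a, b). a < b \<and> b < length s \<and> s ! b < s ! a}"

lemma invset_Cons:
  "invset (x # xs) = (\<lambda>b. (0, Suc b)) ` {b. b < length xs \<and> xs ! b < x} \<union> (\<lambda>(a, b). (Suc a, Suc b)) ` invset xs"
proof (intro equalityI subsetI)
  fix p assume p: "p \<in> invset (x # xs)"
  obtain a b where ab: "p = (a, b)" by (cases p)
  have h: "a < b" "b < Suc (length xs)" "(x # xs) ! b < (x # xs) ! a" using p ab unfolding invset_def by auto
  obtain b' where b': "b = Suc b'" using h(1) by (cases b) auto
  show "p \<in> (\<lambda>b. (0, Suc b)) ` {b. b < length xs \<and> xs ! b < x} \<union> (\<lambda>(a, b). (Suc a, Suc b)) ` invset xs"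
  proof (cases a)
    case 0
    then show ?thesis using h ab b' by auto
  next
    case (Suc a')
    then have "(a', b') \<in> invset xs" using h b' unfolding invset_def by auto
    then show ?thesis using ab Suc b' by force
  qed
next
  fix p assume "p \<in> (\<lambda>b. (0, Suc b)) ` {b. b < length xs \<and> xs ! b < x} \<union> (\<lambda>(a, b). (Suc a, Suc b)) ` invset xs"
  then show "p \<in> invset (x # xs)" unfolding invset_def by auto
qed

lemma invl_card: "invl s = card (invset s)"
proof (induction s)
  case Nil
  then show ?case unfolding invset_def by simp
next
  case (Cons x xs)
  have d: "(\<lambda>b. (0::nat, Suc b)) ` {b. b < length xs \<and> xs ! b < x} \<inter> (\<lambda>(a, b). (Suc a, Suc b)) ` invset xs = {}"
    by auto
  have f1: "finite ((\<lambda>b. (0::nat, Suc b)) ` {b. b < length xs \<and> xs ! b < x})" by simp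
  have f2: "finite (invset xs)" unfolding invset_def
    by (rule finite_subset[of _ "{..<length xs} \<times> {..<length xs}"]) auto
  have c1: "card ((\<lambda>b. (0::nat, Suc b)) ` {b. b < length xs \<and> xs ! b < x}) = length (filter (\<lambda>y. y < x) xs)"
    by (subst card_image) (auto simp: inj_on_def length_filter_conv_card)
  have c2: "card ((\<lambda>(a, b). (Suc a, Suc b)) ` invset xs) = card (invset xs)"
    by (rule card_image) (auto simp: inj_on_def)
  show ?case unfolding invset_Cons card_Un_disjoint[OF f1 finite_imageI[OF f2] d] c1 c2 using Cons.IH by simp
qed

context shp
begin

lemma Psi_val: "ss \<in> PP \<Longrightarrow> x < hgt j \<Longrightarrow> Psi ss (x, j) = T (rho ss j x, j)"
  unfolding Psi_def using boxes_iff by simp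

lemma inv_pair_col:
  assumes ss: "ss \<in> PP" and x: "x < hgt j" and y: "y < hgt j"
  shows "inversion_pair la (Psi ss) (x, j) (y, j) \<longleftrightarrow> rho ss j x < rho ss j y \<and> pi ss j y < pi ss j x"
proof -
  let ?t = "Psi ss"
  have inj: "inj_on ?t (boxes la)" using Psi_SS[OF ss] SS_inj by blast
  have bx: "(x, j) \<in> boxes la" "(y, j) \<in> boxes la" using x y boxes_iff by auto
  have lt: "?t (x, j) < ?t (y, j) \<longleftrightarrow> rho ss j x < rho ss j y"
    using Psi_val[OF ss x] Psi_val[OF ss y] T_col_less_iff rho_lt[OF ss x] rho_lt[OF ss y] by simp
  have sh: "shift (x, j) 1 = (x, Suc j)" "shift (y, j) 1 = (y, Suc j)" unfolding shift_def by auto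
  show ?thesis
  proof (cases "x = y")
    case True
    then show ?thesis unfolding inversion_pair_def by auto
  next
    case False
    have fd: "first_diff la ?t (x, j) (y, j) = 1" using first_diff_1[OF inj bx] False by simp
    have ip: "inversion_pair la ?t (x, j) (y, j) \<longleftrightarrow> rho ss j x < rho ss j y \<and>
        ((\<not> (x < hgt (Suc j) \<and> y < hgt (Suc j)) \<and> y < x) \<or>
         (x < hgt (Suc j) \<and> y < hgt (Suc j) \<and> ?t (y, Suc j) < ?t (x, Suc j)))"
      unfolding inversion_pair_def Let_def fd sh using bx False lt boxes_iff by auto
    show ?thesis
    proof (cases "x < hgt (Suc j) \<and> y < hgt (Suc j)")
      case True
      have "?t (y, Suc j) < ?t (x, Suc j) \<longleftrightarrow> rho ss (Suc j) y < rho ss (Suc j) x"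
        using True Psi_val[OF ss] T_col_less_iff rho_lt[OF ss] by simp
      then show ?thesis using ip True unfolding pi_def by simp
    next
      case False
      have "y < x \<longleftrightarrow> pi ss j y < pi ss j x"
      proof (cases "x < hgt (Suc j)")
        case True
        then have "\<not> y < hgt (Suc j)" using False by simp
        then show ?thesis using True rho_lt[OF ss True] unfolding pi_def by simp
      next
        case xf: False
        show ?thesis
        proof (cases "y < hgt (Suc j)")
          case True
          then show ?thesis using xf rho_lt[OF ss True] unfolding pi_def by simp
        next
          case False
          then show ?thesis using xf unfolding pi_def by simp
        qed
      qed
      then show ?thesis using ip False by auto
    qed
  qed
qed

definition IPc :: "(nat \<Rightarrow> nat list) \<Rightarrow> nat \<Rightarrow> (box \<times> box) set" where
  "IPc ss j = {((x, j), (y, j)) | x y. x < hgt j \<and> y < hgt j \<and> rho ss j x < rho ss j y \<and> pi ss j y < pi ss j x}"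

lemma IP_eq:
  assumes ss: "ss \<in> PP"
  shows "{(c, c'). inversion_pair la (Psi ss) c c'} = (\<Union>j\<in>{..<L}. IPc ss j)"
proof (intro equalityI subsetI)
  fix p assume "p \<in> {(c, c'). inversion_pair la (Psi ss) c c'}"
  then obtain x j y j' where p: "p = ((x, j), (y, j'))" "inversion_pair la (Psi ss) (x, j) (y, j')"
    by (metis (no_types, lifting) case_prodE mem_Collect_eq surj_pair)
  have jj: "j' = j" "(x, j) \<in> boxes la" "(y, j) \<in> boxes la" using p(2) unfolding inversion_pair_def by auto
  then have xy: "x < hgt j" "y < hgt j" using boxes_iff by auto
  have jL: "j < L" using hgt_pos_L xy by simp
  have "rho ss j x < rho ss j y \<and> pi ss j y < pi ss j x" using inv_pair_col[OF ss xy] p(2) jj by simp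
  then show "p \<in> (\<Union>j\<in>{..<L}. IPc ss j)" unfolding IPc_def using p jj xy jL by blast
next
  fix p assume "p \<in> (\<Union>j\<in>{..<L}. IPc ss j)"
  then obtain j x y where "p = ((x, j), (y, j))" "x < hgt j" "y < hgt j" "rho ss j x < rho ss j y" "pi ss j y < pi ss j x"
    unfolding IPc_def by blast
  then show "p \<in> {(c, c'). inversion_pair la (Psi ss) c c'}" using inv_pair_col[OF ss] by simp
qed

lemma card_IPc:
  assumes ss: "ss \<in> PP" and jL: "j < L"
  shows "card (IPc ss j) = invl (ss j)"
proof -
  let ?g = "\<lambda>((x::nat, j::nat), (y::nat, j'::nat)). (pi ss j y, pi ss j x)"
  have sj: "ss j \<in> QQ j" using ss jL unfolding PP_def by (auto intro: PiE_mem)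
  have len: "length (ss j) = hgt j" using sj length_perms unfolding QQ_def by auto
  have pb: "bij_betw (pi ss j) {..<hgt j} {..<hgt j}" using pi_bij'[OF ss] .
  have rp: "rho ss j x = ss j ! pi ss j x" for x using rho_pi .
  have "inj_on ?g (IPc ss j)"
  proof (rule inj_onI)
    fix p q assume p: "p \<in> IPc ss j" and q: "q \<in> IPc ss j" and e: "?g p = ?g q"
    obtain x y where px: "p = ((x, j), (y, j))" "x < hgt j" "y < hgt j" using p unfolding IPc_def by blast
    obtain x' y' where qx: "q = ((x', j), (y', j))" "x' < hgt j" "y' < hgt j" using q unfolding IPc_def by blast
    have "pi ss j y = pi ss j y'" "pi ss j x = pi ss j x'" using e px qx by auto
    moreover have "inj_on (pi ss j) {..<hgt j}" using pb unfolding bij_betw_def by simp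
    ultimately have "y = y'" "x = x'" using px qx by (auto dest: inj_onD)
    then show "p = q" using px qx by simp
  qed
  moreover have "?g ` IPc ss j = invset (ss j)"
  proof (intro equalityI subsetI)
    fix q assume "q \<in> ?g ` IPc ss j"
    then obtain p where p: "p \<in> IPc ss j" "q = ?g p" by blast
    then obtain x y where pxy: "p = ((x, j), (y, j))" "x < hgt j" "y < hgt j"
        "rho ss j x < rho ss j y" "pi ss j y < pi ss j x"
      unfolding IPc_def by blast
    then have q: "q = (pi ss j y, pi ss j x)" "x < hgt j" "y < hgt j"
        "rho ss j x < rho ss j y" "pi ss j y < pi ss j x" using p by simp_all
    have "pi ss j x < hgt j" using pb q(2) bij_betwE by blast
    then show "q \<in> invset (ss j)" unfolding invset_def using q len rp by auto
  next
    fix q assume q: "q \<in> invset (ss j)"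
    obtain a b where ab: "q = (a, b)" "a < b" "b < hgt j" "ss j ! b < ss j ! a"
      using q len unfolding invset_def by auto
    have im: "pi ss j ` {..<hgt j} = {..<hgt j}" using pb bij_betw_imp_surj_on by blast
    have "b \<in> pi ss j ` {..<hgt j}" "a \<in> pi ss j ` {..<hgt j}" unfolding im using ab by auto
    then obtain x y where x: "x < hgt j" "pi ss j x = b" and y: "y < hgt j" "pi ss j y = a" by blast
    have "((x, j), (y, j)) \<in> IPc ss j" unfolding IPc_def using x y ab rp by auto
    moreover have "q = ?g ((x, j), (y, j))" using x y ab by simp
    ultimately show "q \<in> ?g ` IPc ss j" by (rule rev_image_eqI)
  qed
  ultimately have "card (IPc ss j) = card (invset (ss j))" using card_image[of ?g "IPc ss j"] by simp
  then show ?thesis using invl_card by simp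
qed

lemma inv_count_Psi:
  assumes ss: "ss \<in> PP"
  shows "inv_count la (Psi ss) = (\<Sum>j<L. invl (ss j))"
proof -
  have fin: "finite (IPc ss j)" for j
  proof -
    have "IPc ss j \<subseteq> ((\<lambda>x. (x, j)) ` {..<hgt j}) \<times> ((\<lambda>x. (x, j)) ` {..<hgt j})"
      unfolding IPc_def by auto
    then show ?thesis by (rule finite_subset) simp
  qed
  have "inv_count la (Psi ss) = card (\<Union>j\<in>{..<L}. IPc ss j)" unfolding inv_count_def IP_eq[OF ss] ..
  also have "\<dots> = (\<Sum>j<L. card (IPc ss j))"
    apply (rule card_UN_disjoint)
      apply simp
     apply (simp add: fin)
    apply (auto simp: IPc_def)
    done
  also have "\<dots> = (\<Sum>j<L. invl (ss j))" using card_IPc[OF ss] by simp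
  finally show ?thesis .
qed

end

context shp
begin

definition cb :: "nat \<Rightarrow> nat \<Rightarrow> nat" where
  "cb j k = (if k < hgt (Suc j) then card {m. m < hgt j \<and> T (m, j) < T (k, Suc j)} else hgt j)"

lemma cnt_eq: "{m. m < hgt j \<and> T (m, j) < b} = {..<card {m. m < hgt j \<and> T (m, j) < b}}"
proof (rule downclosed_eq)
  fix i i' assume "i' \<le> i" "i < hgt j \<and> T (i, j) < b"
  then show "i' < hgt j \<and> T (i', j) < b" using T_col_le[of i' i j] by simp
qed simp

lemma cnt_iff: "m < hgt j \<Longrightarrow> T (m, j) < b \<longleftrightarrow> m < card {m. m < hgt j \<and> T (m, j) < b}"
  using cnt_eq[of j b] by (metis (no_types, lifting) lessThan_iff mem_Collect_eq)

lemma QQ_eq: "QQ j = Q (hgt j) (cb j)"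
proof -
  have "(\<forall>k<hgt (Suc j). T (s ! k, j) < T (k, Suc j)) \<longleftrightarrow> (\<forall>k<hgt j. s ! k < cb j k)"
    if s: "s \<in> perms (hgt j)" for s
  proof -
    have sk: "s ! k < hgt j" if "k < hgt j" for k
    proof -
      have "s ! k \<in> set s" using that length_perms[OF s] by simp
      then show ?thesis using s unfolding perms_def by simp
    qed
    show ?thesis
    proof
      assume a: "\<forall>k<hgt (Suc j). T (s ! k, j) < T (k, Suc j)"
      show "\<forall>k<hgt j. s ! k < cb j k"
      proof (intro allI impI)
        fix k assume k: "k < hgt j"
        show "s ! k < cb j k"
        proof (cases "k < hgt (Suc j)")
          case True
          then show ?thesis using a sk[OF k] cnt_iff[of "s ! k" j "T (k, Suc j)"] unfolding cb_def by simp
        next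
          case False
          then show ?thesis using sk[OF k] unfolding cb_def by simp
        qed
      qed
    next
      assume a: "\<forall>k<hgt j. s ! k < cb j k"
      show "\<forall>k<hgt (Suc j). T (s ! k, j) < T (k, Suc j)"
      proof (intro allI impI)
        fix k assume k: "k < hgt (Suc j)"
        then have kj: "k < hgt j" using hgt_Suc[of j] by simp
        have "s ! k < cb j k" using a kj by simp
        then show "T (s ! k, j) < T (k, Suc j)" using k sk[OF kj] cnt_iff[of "s ! k" j "T (k, Suc j)"] unfolding cb_def by simp
      qed
    qed
  qed
  then show ?thesis unfolding QQ_def Q_def by blast
qed

lemma cb_props:
  shows "\<forall>k<hgt j. k < cb j k \<and> cb j k \<le> hgt j"
    and "\<forall>k. Suc k < hgt j \<longrightarrow> cb j k \<le> cb j (Suc k)"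
proof -
  have fin: "finite {m. m < hgt j \<and> T (m, j) < b}" for b by simp
  have le: "card {m. m < hgt j \<and> T (m, j) < b} \<le> hgt j" for b
    using card_mono[of "{..<hgt j}" "{m. m < hgt j \<and> T (m, j) < b}"] by auto
  show "\<forall>k<hgt j. k < cb j k \<and> cb j k \<le> hgt j"
  proof (intro allI impI conjI)
    fix k assume k: "k < hgt j"
    show "cb j k \<le> hgt j" unfolding cb_def using le by simp
    show "k < cb j k"
    proof (cases "k < hgt (Suc j)")
      case True
      have "{..k} \<subseteq> {m. m < hgt j \<and> T (m, j) < T (k, Suc j)}"
      proof
        fix m assume "m \<in> {..k}"
        then have m: "m \<le> k" by simp
        then have "m < hgt (Suc j)" using True by simp
        then have "T (m, j) < T (m, Suc j)" by (rule T_row)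
        also have "\<dots> \<le> T (k, Suc j)" using T_col_le m True by simp
        finally show "m \<in> {m. m < hgt j \<and> T (m, j) < T (k, Suc j)}" using m k by simp
      qed
      then have "card {..k} \<le> card {m. m < hgt j \<and> T (m, j) < T (k, Suc j)}"
        by (intro card_mono) simp_all
      then show ?thesis unfolding cb_def using True by simp
    next
      case False
      then show ?thesis unfolding cb_def using k by simp
    qed
  qed
  show "\<forall>k. Suc k < hgt j \<longrightarrow> cb j k \<le> cb j (Suc k)"
  proof (intro allI impI)
    fix k assume k: "Suc k < hgt j"
    show "cb j k \<le> cb j (Suc k)"
    proof (cases "Suc k < hgt (Suc j)")
      case True
      have "T (k, Suc j) < T (Suc k, Suc j)" using T_col_Suc True by simp
      then have "{m. m < hgt j \<and> T (m, j) < T (k, Suc j)} \<subseteq> {m. m < hgt j \<and> T (m, j) < T (Suc k, Suc j)}"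
        by auto
      then show ?thesis unfolding cb_def using True by (simp add: card_mono)
    next
      case False
      then show ?thesis unfolding cb_def using le by simp
    qed
  qed
qed

lemma gen_QQ: "gen (QQ j) invl = (\<Prod>k<hgt j. W (cb j k - k))"
  unfolding QQ_eq by (rule gen_Q[OF cb_props])

lemma finite_QQ: "finite (QQ j)"
  unfolding QQ_eq by (rule finite_Q)

lemma finite_PP: "finite PP"
  unfolding PP_def by (rule finite_PiE) (simp_all add: finite_QQ)

lemma gen_SS: "gen SS (inv_count la) = (\<Prod>p\<in>Sigma {..<L} (\<lambda>j. {..<hgt j}). W (cb (fst p) (snd p) - snd p))"
proof -
  have "gen SS (inv_count la) = gen PP (\<lambda>ss. \<Sum>j\<in>{..<L}. invl (ss j))"
    by (rule gen_bij[OF Psi_bij]) (simp add: inv_count_Psi)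
  also have "\<dots> = (\<Prod>j\<in>{..<L}. gen (QQ j) invl)"
    unfolding PP_def by (rule gen_PiE) (simp_all add: finite_QQ)
  also have "\<dots> = (\<Prod>j\<in>{..<L}. \<Prod>k<hgt j. W (cb j k - k))" by (simp add: gen_QQ)
  also have "\<dots> = (\<Prod>p\<in>Sigma {..<L} (\<lambda>j. {..<hgt j}). W (cb (fst p) (snd p) - snd p))"
    by (subst prod.Sigma) (auto simp: case_prod_beta)
  finally show ?thesis .
qed

lemma lc_SS: "lc (seq (gen SS (inv_count la)))"
proof -
  have "lc (seq (\<Prod>p\<in>Sigma {..<L} (\<lambda>j. {..<hgt j}). W (cb (fst p) (snd p) - snd p)))"
  proof (rule lc_niz_prod_W[THEN conjunct1])
    show "finite (Sigma {..<L} (\<lambda>j. {..<hgt j}))" by simp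
  next
    fix p assume "p \<in> Sigma {..<L} (\<lambda>j. {..<hgt j})"
    then have "snd p < cb (fst p) (snd p)" using cb_props(1) by auto
    then show "1 \<le> cb (fst p) (snd p) - snd p" by simp
  qed
  then show ?thesis unfolding gen_SS .
qed

lemma card_SkT: "card (S_k_T la k T) = coeff (gen SS (inv_count la)) k"
proof -
  have fin: "finite SS" using Psi_bij finite_PP bij_betw_finite by blast
  have "S_k_T la k T = {\<tau> \<in> SS. inv_count la \<tau> = k}"
    unfolding S_k_T_def S_k_def SS_def by auto
  then show ?thesis using coeff_gen[OF fin] by simp
qed

end

theorem mainTheorem7:
  fixes la :: "nat list" and T :: "box \<Rightarrow> nat" and k :: nat
  assumes "is_shape la" and "standard la T" and "1 \<le> k"
  shows "card (S_k_T la (k - 1) T) * card (S_k_T la (k + 1) T) \<le> (card (S_k_T la k T))^2"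
proof -
  interpret shp la T using assms(1,2) by unfold_locales
  let ?G = "gen SS (inv_count la)"
  have "seq ?G (int k - 1) * seq ?G (int k + 1) \<le> seq ?G (int k) * seq ?G (int k)"
    using lc_SS unfolding lc_def by blast
  moreover have "seq ?G (int k - 1) = coeff ?G (k - 1)" unfolding seq_def using assms(3)
    by (simp add: nat_diff_distrib')
  moreover have "seq ?G (int k + 1) = coeff ?G (k + 1)" unfolding seq_def by (simp add: nat_add_distrib)
  moreover have "seq ?G (int k) = coeff ?G k" unfolding seq_def by simp
  ultimately show ?thesis unfolding card_SkT power2_eq_square by simp
qed


end
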